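(* For positive integers $a,c$ let $f^a_c(x,y,z)=ax^2+c(y^2+yz+z^2)$ with $x,y,z\in\mathbb{Z}$. There exist no positive integers $a,c$ such that $f^a_c$ represents every natural number.
   Context: Natural numbers are the positive integers $1,2,3,\dots$. *)

theory Defs
  imports Main
begin

definition f_form :: "int \<Rightarrow> int \<Rightarrow> int \<Rightarrow> int \<Rightarrow> int \<Rightarrow> int" where
  "f_form a c x y z = a * x^2 + c * (y^2 + y*z + z^2)"

end

theory Submission
  imports Defs
begin

lemma sq_range: "(x::int)^2 \<le> 15 \<Longrightarrow> x \<in> {-3,-2,-1,0,1,2,3}"
proof -
  assume h: "x^2 \<le> 15"
  have "\<bar>x\<bar> \<le> 3"
  proof (rule ccontr)
    assume "\<not> \<bar>x\<bar> \<le> 3"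
    hence "4 \<le> \<bar>x\<bar>" by simp
    hence "4*4 \<le> \<bar>x\<bar>*\<bar>x\<bar>" by (intro mult_mono) auto
    thus False using h by (simp add: power2_eq_square)
  qed
  hence "x \<in> {-3..3}" by auto
  also have "{-3..3::int} = {-3,-2,-1,0,1,2,3}" by auto
  finally show ?thesis .
qed

lemma sq_small: "(x::int)^2 \<le> 15 \<Longrightarrow> x^2 \<in> {0,1,4,9}"
  using sq_range[of x] by (auto simp: power2_eq_square)

lemma q_small:
  fixes y z :: int
  assumes "y^2+y*z+z^2 \<le> 10"
  shows "y^2+y*z+z^2 \<in> {0,1,3,4,7,9}"
proof -
  have e: "4*y^2+4*(y*z)+4*z^2 = (2*y+z)^2 + 3*z^2" by algebra
  have e2: "4*y^2+4*(y*z)+4*z^2 = (2*z+y)^2 + 3*y^2" by algebra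
  have p: "(2*y+z)^2 \<ge> 0" "(2*z+y)^2 \<ge> 0" by simp_all
  have "z^2 \<le> 15" using p e assms by linarith
  moreover have "y^2 \<le> 15" using p e2 assms by linarith
  ultimately
  have ys: "y \<in> {-3,-2,-1,0,1,2,3}" and zs: "z \<in> {-3,-2,-1,0,1,2,3}"
    using sq_range by blast+
  show ?thesis using ys zs assms by (auto simp: power2_eq_square)
qed

lemma R:
  fixes a c x y z n :: int
  assumes "a*x^2 + c*(y^2+y*z+z^2) = n" "a>0" "c>0" "n \<le> 10"
  shows "\<exists>X\<in>{0,1,4,9}. \<exists>Q\<in>{0,1,3,4,7,9}. a*X + c*Q = n"
proof -
  have q0: "y^2+y*z+z^2 \<ge> 0"
  proof -
    have "4*(y^2+y*z+z^2) = (2*y+z)^2 + 3*z^2" by algebra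
    thus ?thesis by (smt (verit) zero_le_power2)
  qed
  have x0: "x^2 \<ge> 0" by simp
  have "a*x^2 \<ge> x^2" using assms(2) x0 by (simp add: mult_le_cancel_right1)
  moreover have "c*(y^2+y*z+z^2) \<ge> y^2+y*z+z^2" using assms(3) q0
    by (simp add: mult_le_cancel_right1)
  moreover have "a*x^2 \<ge> 0" "c*(y^2+y*z+z^2) \<ge> 0" using assms q0 by auto
  ultimately have "x^2 \<le> 15" "y^2+y*z+z^2 \<le> 10" using assms(1,4) by linarith+
  thus ?thesis using sq_small q_small assms(1) by blast
qed

theorem theorem3p9:
  shows "\<not> (\<exists>a c :: int. a > 0 \<and> c > 0 \<and>
           (\<forall>n :: int. n \<ge> 1 \<longrightarrow> (\<exists>x y z :: int. f_form a c x y z = n)))"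
proof
  assume "\<exists>a c :: int. a > 0 \<and> c > 0 \<and>
           (\<forall>n :: int. n \<ge> 1 \<longrightarrow> (\<exists>x y z :: int. f_form a c x y z = n))"
  then obtain a c :: int where a: "a > 0" and c: "c > 0" and
    h: "\<And>n. n \<ge> 1 \<Longrightarrow> \<exists>x y z :: int. f_form a c x y z = n" by blast
  have P: "\<exists>X\<in>{0,1,4,9}. \<exists>Q\<in>{0,1,3,4,7,9}. a*X + c*Q = n" if n1: "1 \<le> n" and n2: "n \<le> 10" for n
  proof -
    obtain x y z where "f_form a c x y z = n" using h[OF n1] by blast
    thus ?thesis using R a c n2 unfolding f_form_def by blast
  qed
  have "a = 1 \<or> c = 1" using P[of 1] a c by auto
  hence ac: "(a = 1 \<and> c = 1) \<or> (a = 1 \<and> c = 2) \<or> (a = 2 \<and> c = 1)"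
    using P[of 2] a c by auto
  show False
  proof -
    { assume "a = 1" "c = 1" hence False using P[of 6] by auto }
    moreover { assume "a = 1" "c = 2" hence False using P[of 5] by auto }
    moreover { assume "a = 2" "c = 1" hence False using P[of 10] by auto }
    ultimately show False using ac by blast
  qed
qed

end
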